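(* Let $\Omega\subset\mathbb{R}^n$ be a domain and let $\mathcal{X}(\Omega)$ be a normed space of measurable functions on $\Omega$ satisfying properties (i) and (ii) below. Let $f\in\mathcal{X}(\Omega)$ and put $$\mu(\rho)=\sup_{x\in\Omega}\|f\|_{\mathcal{X},B_\rho(x)\cap\Omega}.$$ Then $\mu(\rho)\to0$ as $\rho\to0$.
   Context: For $\Omega_1\subset\Omega$ one sets $\|f\|_{\mathcal{X},\Omega_1}=\|f\chi_{\Omega_1}\|_{\mathcal{X},\Omega}$, where $\chi_{\Omega_1}$ is the characteristic function of $\Omega_1$. Properties of $\mathcal{X}(\Omega)$: - (i) If $g$ is measurable, $f\in\mathcal{X}(\Omega)$ and $|g|\le|f|$, then $g\in\mathcal{X}(\Omega)$ and $\|g\|_{\mathcal{X},\Omega}\le\|f\|_{\mathcal{X},\Omega}$. - (ii) If $f_k\in\mathcal{X}(\Omega)$ and $f_k\searrow0$ a.e., then $\|f_k\|_{\mathcal{X},\Omega}\to0$. *)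

theory Defs
  imports "HOL-Analysis.Analysis"
begin

text \<open>Functions on \<Omega> are represented as total functions 'a \<Rightarrow> real; only their
values on \<Omega> are relevant.  X is the carrier (a set of functions), N the norm.\<close>

definition restr_norm :: "(('a \<Rightarrow> real) \<Rightarrow> real) \<Rightarrow> 'a set \<Rightarrow> ('a \<Rightarrow> real) \<Rightarrow> real" where
  "restr_norm N \<Omega>1 f = N (\<lambda>y. f y * indicator \<Omega>1 y)"

text \<open>X is a normed space of (Lebesgue) measurable functions on \<Omega>,
  functions being identified when equal a.e. on \<Omega>.\<close>
definition meas_normed_space ::
  "'a::euclidean_space set \<Rightarrow> ('a \<Rightarrow> real) set \<Rightarrow> (('a \<Rightarrow> real) \<Rightarrow> real) \<Rightarrow> bool" where
  "meas_normed_space \<Omega> X N \<longleftrightarrow>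
     X \<subseteq> borel_measurable (lebesgue_on \<Omega>) \<and>
     (\<lambda>x. 0) \<in> X \<and>
     (\<forall>f\<in>X. \<forall>g\<in>X. (\<lambda>x. f x + g x) \<in> X) \<and>
     (\<forall>f\<in>X. \<forall>c. (\<lambda>x. c * f x) \<in> X) \<and>
     (\<forall>f\<in>X. N f \<ge> 0) \<and>
     (\<forall>f\<in>X. N f = 0 \<longleftrightarrow> (AE x in lebesgue_on \<Omega>. f x = 0)) \<and>
     (\<forall>f\<in>X. \<forall>g\<in>X. N (\<lambda>x. f x + g x) \<le> N f + N g) \<and>
     (\<forall>f\<in>X. \<forall>c. N (\<lambda>x. c * f x) = \<bar>c\<bar> * N f)"

definition prop_i ::
  "'a::euclidean_space set \<Rightarrow> ('a \<Rightarrow> real) set \<Rightarrow> (('a \<Rightarrow> real) \<Rightarrow> real) \<Rightarrow> bool" where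
  "prop_i \<Omega> X N \<longleftrightarrow>
     (\<forall>f g. g \<in> borel_measurable (lebesgue_on \<Omega>) \<and> f \<in> X \<and> (\<forall>x\<in>\<Omega>. \<bar>g x\<bar> \<le> \<bar>f x\<bar>)
        \<longrightarrow> g \<in> X \<and> N g \<le> N f)"

definition prop_ii ::
  "'a::euclidean_space set \<Rightarrow> ('a \<Rightarrow> real) set \<Rightarrow> (('a \<Rightarrow> real) \<Rightarrow> real) \<Rightarrow> bool" where
  "prop_ii \<Omega> X N \<longleftrightarrow>
     (\<forall>F :: nat \<Rightarrow> 'a \<Rightarrow> real. (\<forall>k. F k \<in> X) \<and>
        (AE x in lebesgue_on \<Omega>. decseq (\<lambda>k. F k x) \<and> (\<lambda>k. F k x) \<longlonglongrightarrow> 0)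
        \<longrightarrow> (\<lambda>k. N (F k)) \<longlonglongrightarrow> 0)"

end

theory Submission imports Defs "HOL-Analysis.Analysis" begin
lemma ind_meas:
  fixes U \<Omega> :: "'a::euclidean_space set"
  assumes "open U" 
  shows "(indicator U :: 'a \<Rightarrow> real) \<in> borel_measurable (lebesgue_on \<Omega>)"
proof -
  have "(indicator U :: 'a \<Rightarrow> real) \<in> borel_measurable borel"
    using assms by (intro borel_measurable_indicator) auto
  then have "(indicator U :: 'a \<Rightarrow> real) \<in> borel_measurable lebesgue"
    by (simp add: measurable_completion)
  then show ?thesis by (rule measurable_restrict_space1)
qed

lemma small_ball:
  assumes "e > 0"
  shows "\<exists>\<delta>>0. measure lborel (ball (c::'a::euclidean_space) \<delta>) < e"
proof -
  define v where "v = unit_ball_vol (real DIM('a))"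
  have "((\<lambda>d::real. v * d ^ DIM('a)) \<longlongrightarrow> v * 0 ^ DIM('a)) (at_right 0)"
    by (intro tendsto_intros)
  then have "((\<lambda>d::real. v * d ^ DIM('a)) \<longlongrightarrow> 0) (at_right 0)"
    by (metis DIM_positive mult_zero_right power_0_left not_less0)
  then have "eventually (\<lambda>d. v * d ^ DIM('a) < e) (at_right (0::real))"
    using assms by (rule order_tendstoD)
  then obtain b where b: "b > 0" "\<And>y. 0 < y \<Longrightarrow> y < b \<Longrightarrow> v * y ^ DIM('a) < e"
    unfolding eventually_at_right_field by auto
  have "measure lborel (ball c (b/2)) = v * (b/2) ^ DIM('a)"
    using b by (simp add: measure_def emeasure_ball v_def)
  then show ?thesis using b by (intro exI[of _ "b/2"]) auto
qed

theorem lemma2p3: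
  fixes \<Omega> :: "'a::euclidean_space set"
    and X :: "('a \<Rightarrow> real) set"
    and N :: "('a \<Rightarrow> real) \<Rightarrow> real"
    and f :: "'a \<Rightarrow> real"
  assumes "open \<Omega>" and "connected \<Omega>" and "\<Omega> \<noteq> {}"
    and "meas_normed_space \<Omega> X N"
    and "prop_i \<Omega> X N"
    and "prop_ii \<Omega> X N"
    and "f \<in> X"
  shows "((\<lambda>\<rho>. SUP x\<in>\<Omega>. restr_norm N (ball x \<rho> \<inter> \<Omega>) f) \<longlongrightarrow> 0) (at_right 0)"
proof -
  note ms = assms(4)[unfolded meas_normed_space_def]
  note pi = assms(5)[unfolded prop_i_def]
  note pii = assms(6)[unfolded prop_ii_def]
  have fmeas: "f \<in> borel_measurable (lebesgue_on \<Omega>)" using ms assms(7) by auto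
  have Nnn: "\<And>g. g \<in> X \<Longrightarrow> N g \<ge> 0" using ms by auto
  have mU: "(\<lambda>y. f y * indicator U y) \<in> borel_measurable (lebesgue_on \<Omega>)" if "open U" for U
    using fmeas ind_meas[OF that] by (intro borel_measurable_times) auto
  have mU': "(\<lambda>y. \<bar>f y\<bar> * indicator U y) \<in> borel_measurable (lebesgue_on \<Omega>)" if "open U" for U
    using fmeas ind_meas[OF that] by (intro borel_measurable_times borel_measurable_abs) auto
  have ind_abs: "\<bar>g y * indicator U y\<bar> \<le> \<bar>g y\<bar>" for g :: "'a \<Rightarrow> real" and U y
    by (simp add: indicator_def)
  have rX: "(\<lambda>y. f y * indicator (ball x \<rho> \<inter> \<Omega>) y) \<in> X \<and>
      N (\<lambda>y. f y * indicator (ball x \<rho> \<inter> \<Omega>) y) \<le> N f" for x \<rho>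
    using pi mU[of "ball x \<rho> \<inter> \<Omega>"] assms(1,7) ind_abs[of f] by blast
  have r0: "0 \<le> restr_norm N (ball x \<rho> \<inter> \<Omega>) f" for x \<rho>
    unfolding restr_norm_def using rX Nnn by blast
  have rle: "restr_norm N (ball x \<rho> \<inter> \<Omega>) f \<le> N f" for x \<rho>
    unfolding restr_norm_def using rX by blast
  have mono: "restr_norm N (ball x \<rho> \<inter> \<Omega>) f \<le> restr_norm N (ball x \<delta> \<inter> \<Omega>) f"
    if "\<rho> \<le> \<delta>" for x \<rho> \<delta>
  proof -
    have "\<forall>y\<in>\<Omega>. \<bar>f y * indicator (ball x \<rho> \<inter> \<Omega>) y\<bar> \<le> \<bar>f y * indicator (ball x \<delta> \<inter> \<Omega>) y\<bar>"
      using that by (auto simp: indicator_def)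
    then show ?thesis unfolding restr_norm_def
      using pi mU[of "ball x \<rho> \<inter> \<Omega>"] assms(1) rX[of x \<delta>] by blast
  qed
  have key: "\<exists>\<delta>>0. \<forall>x\<in>\<Omega>. restr_norm N (ball x \<delta> \<inter> \<Omega>) f \<le> \<epsilon>" if "\<epsilon> > 0" for \<epsilon>
  proof (rule ccontr)
    assume "\<not> ?thesis"
    then have "\<forall>\<delta>>0. \<exists>x\<in>\<Omega>. restr_norm N (ball x \<delta> \<inter> \<Omega>) f > \<epsilon>" by (auto simp: not_le)
    moreover have "\<forall>n. \<exists>\<delta>>0. measure lborel (ball (0::'a) \<delta>) < (1/2)^n"
      using small_ball[of "(1/2::real)^_" "0::'a"] by simp
    then obtain d where d: "\<And>n. d n > 0" "\<And>n. measure lborel (ball (0::'a) (d n)) < (1/2)^n"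
      by metis
    ultimately have "\<forall>n. \<exists>x. x \<in> \<Omega> \<and> restr_norm N (ball x (d n) \<inter> \<Omega>) f > \<epsilon>"
      by blast
    then obtain x where x: "\<And>n. x n \<in> \<Omega>" "\<And>n. restr_norm N (ball (x n) (d n) \<inter> \<Omega>) f > \<epsilon>"
      by metis
    define A where "A n = ball (x n) (d n)" for n
    have mA: "measure lborel (A n) < (1/2)^n" for n
      using d(1)[of n] d(2)[of n] by (simp add: A_def measure_def emeasure_ball)
    have sA: "summable (\<lambda>n. measure lborel (A n))"
      by (rule summable_comparison_test[of _ "\<lambda>n. (1/2::real)^n"])
         (use mA less_imp_le in auto)
    have "AE y in lborel. eventually (\<lambda>n. y \<in> space lborel - A n) sequentially"
      by (rule borel_cantelli_AE1) (use d(1) sA in \<open>auto simp: A_def emeasure_ball less_imp_le\<close>)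
    then have "AE y in lebesgue. eventually (\<lambda>n. y \<notin> A n) sequentially"
      by (intro AE_completion) auto
    then have AEl: "AE y in lebesgue_on \<Omega>. eventually (\<lambda>n. y \<notin> A n) sequentially"
      using assms(1) by (subst AE_restrict_space_iff) auto
    define F where "F k y = \<bar>f y\<bar> * indicator (\<Union>j\<in>{k..}. A j) y" for k y
    have oU: "open (\<Union>j\<in>{k..}. A j)" for k by (auto simp: A_def)
    have FX: "F k \<in> X \<and> N (F k) \<le> N f" for k
    proof -
      have "\<forall>y\<in>\<Omega>. \<bar>F k y\<bar> \<le> \<bar>f y\<bar>" by (auto simp: F_def indicator_def)
      then show ?thesis using pi mU'[OF oU[of k]] assms(7) unfolding F_def by blast
    qed
    have Fgt: "N (F k) > \<epsilon>" for k
    proof -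
      have "\<forall>y\<in>\<Omega>. \<bar>f y * indicator (ball (x k) (d k) \<inter> \<Omega>) y\<bar> \<le> \<bar>F k y\<bar>"
        by (auto simp: indicator_def F_def A_def)
      then have "N (\<lambda>y. f y * indicator (ball (x k) (d k) \<inter> \<Omega>) y) \<le> N (F k)"
        using pi mU[of "ball (x k) (d k) \<inter> \<Omega>"] assms(1) FX by blast
      then show ?thesis using x(2)[of k] unfolding restr_norm_def by linarith
    qed
    have "AE y in lebesgue_on \<Omega>. decseq (\<lambda>k. F k y) \<and> (\<lambda>k. F k y) \<longlonglongrightarrow> 0"
      using AEl
    proof eventually_elim
      case (elim y)
      have "decseq (\<lambda>k. F k y)"
        unfolding decseq_def F_def by (auto simp: indicator_def)
      moreover have "eventually (\<lambda>k. F k y = 0) sequentially"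
      proof -
        obtain K where "\<And>n. n \<ge> K \<Longrightarrow> y \<notin> A n" using elim unfolding eventually_sequentially by auto
        then show ?thesis unfolding eventually_sequentially F_def
          by (intro exI[of _ K]) (auto simp: indicator_def)
      qed
      then have "(\<lambda>k. F k y) \<longlonglongrightarrow> 0" by (rule tendsto_eventually)
      ultimately show ?case by auto
    qed
    then have "(\<lambda>k. N (F k)) \<longlonglongrightarrow> 0" using pii FX by blast
    then have "eventually (\<lambda>k. N (F k) < \<epsilon>) sequentially"
      using that by (rule order_tendstoD)
    then show False using Fgt unfolding eventually_sequentially by (meson le_refl not_less_iff_gr_or_eq)
  qed
  obtain x0 where x0: "x0 \<in> \<Omega>" using assms(3) by auto
  have bdd: "bdd_above ((\<lambda>x. restr_norm N (ball x \<rho> \<inter> \<Omega>) f) ` \<Omega>)" for \<rho>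
    using rle by (intro bdd_aboveI2) auto
  show ?thesis
  proof (rule tendstoI)
    fix e :: real assume e: "e > 0"
    obtain \<delta> where \<delta>: "\<delta> > 0" "\<forall>x\<in>\<Omega>. restr_norm N (ball x \<delta> \<inter> \<Omega>) f \<le> e/2"
      using key[of "e/2"] e by auto
    show "eventually (\<lambda>\<rho>. dist (SUP x\<in>\<Omega>. restr_norm N (ball x \<rho> \<inter> \<Omega>) f) 0 < e) (at_right 0)"
      unfolding eventually_at_right_field
    proof (intro exI[of _ \<delta>] conjI allI impI)
      show "0 < \<delta>" using \<delta> by simp
    next
      fix \<rho> :: real assume \<rho>: "0 < \<rho>" "\<rho> < \<delta>"
      have u: "(SUP x\<in>\<Omega>. restr_norm N (ball x \<rho> \<inter> \<Omega>) f) \<le> e/2"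
        using \<delta> mono[of \<rho> \<delta>] \<rho> assms(3) by (intro cSUP_least) (auto, smt (verit))
      have l: "0 \<le> (SUP x\<in>\<Omega>. restr_norm N (ball x \<rho> \<inter> \<Omega>) f)"
        using r0[of x0 \<rho>] cSUP_upper[OF x0 bdd[of \<rho>]] by linarith
      show "dist (SUP x\<in>\<Omega>. restr_norm N (ball x \<rho> \<inter> \<Omega>) f) 0 < e"
        using u l e by (simp add: dist_real_def)
    qed
  qed
qed

end
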